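(* Let $\mathfrak g$ be a symmetrizable Kac–Moody algebra of indefinite type whose generalized Cartan matrix $A$ ($n\times n$) is indecomposable with $\det A\ne0$. For $\gamma\in P^+(\mathfrak g)$, the set $U(\gamma)=\{\lambda\in P^+(\mathfrak g):\lambda-\gamma\in Q^+(\mathfrak g)\}$ is finite.
   Context: $P^+(\mathfrak g)$ is the set of dominant integral weights (nonnegative integer combinations of the fundamental weights $\omega_1,\dots,\omega_n$), and $Q^+(\mathfrak g)$ the set of nonnegative integer combinations of the simple roots. Indefinite type is in the sense of Kac's classification of indecomposable generalized Cartan matrices (neither finite nor affine type). *)

theory Defs
  imports "HOL-Analysis.Analysis"
begin

definition gcm :: "int^'n^'n \<Rightarrow> bool" where
  "gcm A \<longleftrightarrow> (\<forall>i. A$i$i = 2) \<and> (\<forall>i j. i \<noteq> j \<longrightarrow> A$i$j \<le> 0)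
     \<and> (\<forall>i j. A$i$j = 0 \<longleftrightarrow> A$j$i = 0)"

definition realmat :: "int^'n^'n \<Rightarrow> real^'n^'n" where
  "realmat A = (\<chi> i j. real_of_int (A$i$j))"

definition indecomposable :: "int^'n^'n \<Rightarrow> bool" where
  "indecomposable A \<longleftrightarrow>
     \<not> (\<exists>S. S \<noteq> {} \<and> S \<noteq> UNIV \<and> (\<forall>i\<in>S. \<forall>j. j \<notin> S \<longrightarrow> A$i$j = 0 \<and> A$j$i = 0))"

definition symmetrizable :: "int^'n^'n \<Rightarrow> bool" where
  "symmetrizable A \<longleftrightarrow> (\<exists>(d::real^'n) (B::real^'n^'n).
     (\<forall>i. d$i \<noteq> 0) \<and> (\<forall>i j. B$i$j = B$j$i) \<and>
     (\<forall>i j. real_of_int (A$i$j) = d$i * B$i$j))"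

text \<open>Kac's classification (Kac, Infinite-dimensional Lie algebras, Thm 4.3). For real vectors,
  v > 0 means all coordinates positive, v \<ge> 0 all coordinates nonnegative.\<close>
definition finite_type :: "int^'n^'n \<Rightarrow> bool" where
  "finite_type A \<longleftrightarrow> det A \<noteq> 0
     \<and> (\<exists>u::real^'n. (\<forall>i. u$i > 0) \<and> (\<forall>i. (realmat A *v u)$i > 0))
     \<and> (\<forall>v::real^'n. (\<forall>i. (realmat A *v v)$i \<ge> 0) \<longrightarrow> ((\<forall>i. v$i > 0) \<or> v = 0))"

definition affine_type :: "int^'n^'n \<Rightarrow> bool" where
  "affine_type A \<longleftrightarrow> rank (realmat A) + 1 = CARD('n)
     \<and> (\<exists>u::real^'n. (\<forall>i. u$i > 0) \<and> realmat A *v u = 0)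
     \<and> (\<forall>v::real^'n. (\<forall>i. (realmat A *v v)$i \<ge> 0) \<longrightarrow> realmat A *v v = 0)"

definition indefinite_type :: "int^'n^'n \<Rightarrow> bool" where
  "indefinite_type A \<longleftrightarrow> gcm A \<and> indecomposable A \<and> \<not> finite_type A \<and> \<not> affine_type A"

text \<open>Weights: since det A \<noteq> 0 the simple coroots form a basis of the Cartan subalgebra, so
  a weight \<lambda> is identified with its vector of values (\<langle>\<lambda>, \<alpha>_i^\<or>\<rangle>)_i in real^'n.
  Fundamental weight \<omega>_i = axis i 1; simple root \<alpha>_j has coordinates \<langle>\<alpha>_j, \<alpha>_i^\<or>\<rangle> = a_ij.\<close>
definition fund_weight :: "'n \<Rightarrow> real^'n" where
  "fund_weight i = axis i 1"

definition simple_root :: "int^'n^'n \<Rightarrow> 'n \<Rightarrow> real^'n" where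
  "simple_root A j = (\<chi> i. real_of_int (A$i$j))"

definition dominant_integral :: "(real^'n) set" where
  "dominant_integral = {\<Sum>i\<in>UNIV. real (m i) *\<^sub>R fund_weight i | m. True}"

definition pos_root_lattice :: "int^'n^'n \<Rightarrow> (real^'n) set" where
  "pos_root_lattice A = {\<Sum>j\<in>UNIV. real (k j) *\<^sub>R simple_root A j | k. True}"

end

theory Submission
  imports Defs
begin

lemma det_realmat: "det (realmat A) = real_of_int (det A)"
  unfolding det_def realmat_def by (simp add: of_int_sum of_int_prod)

lemma mv_comp: "(realmat A *v x) $ i = (\<Sum>j\<in>UNIV. real_of_int (A$i$j) * x$j)"
  by (simp add: matrix_vector_mult_def realmat_def)

lemma L1:
  fixes A :: "int^'n^'n"
  assumes g: "gcm A" and ind: "indecomposable A"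
    and v0: "\<forall>i. v$i \<ge> 0" and mv: "\<forall>i. (realmat A *v v)$i \<ge> 0"
  shows "(\<forall>i. v$i > 0) \<or> v = 0"
proof (rule ccontr)
  assume c: "\<not> ((\<forall>i. v$i > 0) \<or> v = 0)"
  have off: "\<And>i j. i \<noteq> j \<Longrightarrow> A$i$j \<le> 0" using g unfolding gcm_def by blast
  have sym0: "\<And>i j. A$i$j = 0 \<Longrightarrow> A$j$i = 0" using g unfolding gcm_def by blast
  define S where "S = {i. v$i = 0}"
  obtain i1 where "\<not> v$i1 > 0" using c by blast
  then have "v$i1 = 0" using v0[rule_format, of i1] by linarith
  then have "S \<noteq> {}" unfolding S_def by blast
  moreover have "v \<noteq> 0" using c by blast
  then obtain i2 where "v$i2 \<noteq> 0" by (metis vec_eq_iff zero_index)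
  then have "S \<noteq> UNIV" unfolding S_def by blast
  moreover have "\<forall>i\<in>S. \<forall>j. j \<notin> S \<longrightarrow> A$i$j = 0 \<and> A$j$i = 0"
  proof (intro ballI allI impI)
    fix i j assume i: "i \<in> S" and j: "j \<notin> S"
    have vi: "v$i = 0" using i unfolding S_def by simp
    have "v$j \<noteq> 0" using j unfolding S_def by simp
    then have vj: "v$j > 0" using v0[rule_format, of j] by linarith
    have terms: "\<forall>l\<in>UNIV. real_of_int (A$i$l) * v$l \<le> 0"
    proof
      fix l show "real_of_int (A$i$l) * v$l \<le> 0"
      proof (cases "l = i")
        case True then show ?thesis using vi by simp
      next
        case False then have "i \<noteq> l" by simp
        then have "A$i$l \<le> 0" by (rule off)
        then show ?thesis using v0[rule_format, of l] by (simp add: mult_nonpos_nonneg)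
      qed
    qed
    have "(realmat A *v v)$i \<ge> 0" using mv by blast
    then have s1: "(\<Sum>l\<in>UNIV. real_of_int (A$i$l) * v$l) \<ge> 0" unfolding mv_comp .
    have s2: "(\<Sum>l\<in>UNIV. real_of_int (A$i$l) * v$l) \<le> 0"
      by (rule sum_nonpos) (use terms in blast)
    have "(\<Sum>l\<in>UNIV. - (real_of_int (A$i$l) * v$l)) = 0"
      using s1 s2 by (simp add: sum_negf)
    moreover have "\<forall>l\<in>UNIV. 0 \<le> - (real_of_int (A$i$l) * v$l)" using terms by simp
    ultimately have "\<forall>l\<in>UNIV. - (real_of_int (A$i$l) * v$l) = 0"
      using sum_nonneg_eq_0_iff[of UNIV "\<lambda>l. - (real_of_int (A$i$l) * v$l)"] by simp
    then have "\<forall>l\<in>UNIV. real_of_int (A$i$l) * v$l = 0" by simp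
    then have "real_of_int (A$i$j) * v$j = 0" by blast
    then have "A$i$j = 0" using vj by simp
    then show "A$i$j = 0 \<and> A$j$i = 0" using sym0 by blast
  qed
  ultimately show False using ind unfolding indecomposable_def by blast
qed

lemma inv_facts:
  fixes A :: "int^'n^'n"
  assumes "det A \<noteq> 0"
  obtains B where "\<And>x. realmat A *v (B *v x) = x" "\<And>x. B *v (realmat A *v x) = x"
proof -
  have "invertible (realmat A)" using assms by (simp add: invertible_det_nz det_realmat)
  then obtain B where "realmat A ** B = mat 1" "B ** realmat A = mat 1"
    unfolding invertible_def by blast
  then show ?thesis using that by (metis matrix_vector_mul_assoc matrix_vector_mul_lid)
qed

lemma L2:
  fixes A :: "int^'n^'n"
  assumes g: "gcm A" and ind: "indecomposable A" and nf: "\<not> finite_type A" and d: "det A \<noteq> 0"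
    and v0: "\<forall>i. v$i \<ge> 0" and mv: "\<forall>i. (realmat A *v v)$i \<ge> 0"
  shows "v = 0"
proof (rule ccontr)
  assume vn: "v \<noteq> 0"
  obtain B where B1: "\<And>x. realmat A *v (B *v x) = x" and B2: "\<And>x. B *v (realmat A *v x) = x"
    using inv_facts[OF d] by blast
  have vp: "\<forall>i. v$i > 0" using L1[OF g ind v0 mv] vn by blast
  have Mv0: "realmat A *v v \<noteq> 0" using B2[of v] vn by auto
  have P2: "(\<forall>i. w$i > 0) \<or> w = 0" if wm: "\<forall>i. (realmat A *v w)$i \<ge> 0" for w
  proof (cases "\<forall>i. w$i \<ge> 0")
    case True then show ?thesis using L1[OF g ind _ wm] by blast
  next
    case False
    then obtain i1 where i1: "w$i1 < 0" by (auto simp: not_le)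
    define f where "f i = - w$i / v$i" for i
    define t where "t = Max (range f)"
    have "t \<in> range f" unfolding t_def by (rule Max_in) auto
    then obtain i0 where i0: "f i0 = t" by auto
    have tge: "f i \<le> t" for i unfolding t_def by (rule Max_ge) auto
    have tpos: "t > 0" using tge[of i1] i1 vp[rule_format, of i1] unfolding f_def
      by (smt (verit) divide_pos_pos)
    define u where "u = w + t *\<^sub>R v"
    have u0: "\<forall>i. u$i \<ge> 0"
    proof
      fix i have "- w$i / v$i \<le> t" using tge[of i] f_def by simp
      then have "- w$i \<le> t * v$i" using vp[rule_format, of i] by (metis pos_divide_le_eq mult.commute)
      then show "u$i \<ge> 0" unfolding u_def by simp
    qed
    have ui0: "u$i0 = 0" using i0 vp[rule_format, of i0] unfolding u_def f_def by (simp add: field_simps)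
    have Mu_eq: "(realmat A *v u)$i = (realmat A *v w)$i + t * (realmat A *v v)$i" for i
      unfolding u_def mv_comp by (simp add: sum.distrib sum_distrib_left algebra_simps)
    have Mu: "\<forall>i. (realmat A *v u)$i \<ge> 0"
    proof
      fix i show "(realmat A *v u)$i \<ge> 0" unfolding Mu_eq
        using wm[rule_format, of i] mv[rule_format, of i] tpos by simp
    qed
    have "u = 0" using L1[OF g ind u0 Mu] ui0 by (metis less_irrefl)
    then have wt: "w = - (t *\<^sub>R v)" unfolding u_def using eq_neg_iff_add_eq_0 by blast
    have "(realmat A *v v)$i \<le> 0" for i
    proof -
      have "(realmat A *v w)$i = - t * (realmat A *v v)$i" unfolding wt mv_comp
        by (simp add: sum_distrib_left sum_negf[symmetric] algebra_simps)
      then show ?thesis using wm[rule_format, of i] tpos by (simp add: mult_le_0_iff)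
    qed
    then have "realmat A *v v = 0" using mv by (simp add: vec_eq_iff order_antisym)
    then show ?thesis using Mv0 by simp
  qed
  define u where "u = B *v (\<chi> i. 1)"
  have Mu: "realmat A *v u = (\<chi> i. 1)" unfolding u_def by (rule B1)
  have "\<forall>i. (realmat A *v u)$i \<ge> 0" unfolding Mu by simp
  then have "(\<forall>i. u$i > 0) \<or> u = 0" by (rule P2)
  moreover have "u \<noteq> 0"
  proof
    assume "u = 0"
    then have "realmat A *v u = 0" by simp
    then show False using Mu by (metis vec_lambda_beta zero_index zero_neq_one)
  qed
  ultimately have up: "\<forall>i. u$i > 0" by blast
  have "\<forall>i. (realmat A *v u)$i > 0" unfolding Mu by simp
  then have e: "\<exists>u::real^'n. (\<forall>i. u$i > 0) \<and> (\<forall>i. (realmat A *v u)$i > 0)" using up by blast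
  have p: "\<forall>w::real^'n. (\<forall>i. (realmat A *v w)$i \<ge> 0) \<longrightarrow> ((\<forall>i. w$i > 0) \<or> w = 0)"
    apply (rule allI, rule impI) by (erule P2)
  have "finite_type A" unfolding finite_type_def by (rule conjI[OF d conjI[OF e p]])
  then show False using nf by simp
qed

lemma comp_dom: "(\<Sum>i\<in>UNIV. real (m i) *\<^sub>R fund_weight i) $ j = real (m j)"
proof -
  have "(\<Sum>i\<in>UNIV. real (m i) *\<^sub>R fund_weight i) $ j = (\<Sum>i\<in>UNIV. if j = i then real (m i) else 0)"
    unfolding sum_component by (rule sum.cong) (auto simp: fund_weight_def axis_def)
  then show ?thesis by simp
qed

lemma comp_root: "(\<Sum>j\<in>UNIV. real (k j) *\<^sub>R simple_root A j) = realmat A *v (\<chi> j. real (k j))"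
  by (simp add: vec_eq_iff sum_component simple_root_def mv_comp mult.commute)

lemma min_hom: "(s::real) \<ge> 0 \<Longrightarrow> min 0 (s * y) = s * min 0 y"
  by (cases "y \<le> 0") (auto simp: min_def mult_le_0_iff zero_le_mult_iff)

theorem proposition5p3:
  fixes A :: "int^'n^'n" and gam :: "real^'n"
  assumes "gcm A" and "symmetrizable A" and "indecomposable A"
    and "indefinite_type A" and "det A \<noteq> 0"
    and "gam \<in> dominant_integral"
  shows "finite {lam \<in> dominant_integral. lam - gam \<in> pos_root_lattice A}"
proof -
  have nf: "\<not> finite_type A" using assms(4) unfolding indefinite_type_def by simp
  define M where "M = realmat A"
  define C where "C = {v::real^'n. (\<forall>i. 0 \<le> v$i) \<and> sum (\<lambda>i. v$i) UNIV = 1}"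
  define g where "g v = (\<Sum>i\<in>UNIV. min 0 ((M *v v)$i))" for v :: "real^'n"
  have ghom: "g (s *\<^sub>R x) = s * g x" if "s \<ge> 0" for s x
  proof -
    have "(M *v (s *\<^sub>R x))$i = s * (M *v x)$i" for i
      unfolding M_def by (simp add: mv_comp sum_distrib_left algebra_simps)
    then show ?thesis unfolding g_def using that by (simp add: min_hom sum_distrib_left)
  qed
  have closedC: "closed C" unfolding C_def
    by (intro closed_Collect_conj closed_Collect_all closed_Collect_le closed_Collect_eq continuous_intros)
  have boundedC: "bounded C" unfolding bounded_iff
  proof (intro exI ballI)
    fix x assume x: "x \<in> C"
    have "norm x \<le> sum (\<lambda>i. \<bar>x$i\<bar>) UNIV" by (rule norm_le_l1_cart)
    also have "\<dots> = 1" using x unfolding C_def by simp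
    finally show "norm x \<le> 1" .
  qed
  have compC: "compact C" using closedC boundedC by (simp add: compact_eq_bounded_closed)
  obtain i0 :: 'n where True by simp
  have "axis i0 1 \<in> C" unfolding C_def by (simp add: axis_def)
  then have neC: "C \<noteq> {}" by auto
  have contg: "continuous_on C g" unfolding g_def by (intro continuous_intros)
  obtain v0 where v0: "v0 \<in> C" "\<forall>y\<in>C. g y \<le> g v0"
    using continuous_attains_sup[OF compC neC contg] by blast
  have gneg: "g v < 0" if v: "v \<in> C" for v
  proof -
    have vpos: "\<forall>i. 0 \<le> v$i" using v C_def by simp
    have "v \<noteq> 0" using v C_def by auto
    then have "\<not> (\<forall>i. (M *v v)$i \<ge> 0)" using L2[OF assms(1,3) nf assms(5) vpos] M_def by blast
    then obtain i where hi: "(M *v v)$i < 0" by (auto simp: not_le)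
    have "(\<Sum>i\<in>UNIV. min 0 ((M *v v)$i)) < (\<Sum>i\<in>UNIV. (0::real))"
    proof -
      have "min 0 ((M *v v)$i) < 0" using hi by simp
      then have "\<exists>a\<in>UNIV. min 0 ((M *v v)$a) < 0" by blast
      then show ?thesis using sum_strict_mono_ex1[of UNIV "\<lambda>i. min 0 ((M *v v)$i)" "\<lambda>i. 0"] by simp
    qed
    then show ?thesis unfolding g_def by simp
  qed
  define c where "c = - g v0"
  have cpos: "c > 0" using gneg[OF v0(1)] c_def by simp
  have gle: "g v \<le> - c" if "v \<in> C" for v using v0(2) that c_def by simp
  obtain mg where mg: "gam = (\<Sum>i\<in>UNIV. real (mg i) *\<^sub>R fund_weight i)"
    using assms(6) unfolding dominant_integral_def by blast
  have gam0: "gam$i \<ge> 0" for i unfolding mg comp_dom by simp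
  define G where "G = (\<Sum>i\<in>UNIV. gam$i)"
  define N where "N = nat \<lceil>G / c\<rceil>"
  have sub: "{lam \<in> dominant_integral. lam - gam \<in> pos_root_lattice A}
      \<subseteq> (\<lambda>f. gam + M *v vec_lambda f) ` (PiE UNIV (\<lambda>_. real ` {..N}))"
  proof
    fix lam assume "lam \<in> {lam \<in> dominant_integral. lam - gam \<in> pos_root_lattice A}"
    then obtain m k where m: "lam = (\<Sum>i\<in>UNIV. real (m i) *\<^sub>R fund_weight i)"
      and k: "lam - gam = (\<Sum>j\<in>UNIV. real (k j) *\<^sub>R simple_root A j)"
      unfolding dominant_integral_def pos_root_lattice_def by blast
    define kap where "kap = (\<chi> j. real (k j))"
    have lk: "lam - gam = M *v kap" using k comp_root M_def kap_def by simp
    have lam0: "lam$i \<ge> 0" for i unfolding m comp_dom by simp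
    have "min 0 ((M *v kap)$i) \<ge> - gam$i" for i
      using lk[symmetric] lam0[of i] gam0[of i] by (simp add: vec_eq_iff)
    then have gk: "g kap \<ge> - G" unfolding g_def G_def
      by (simp add: sum_negf[symmetric] sum_mono)
    define s where "s = (\<Sum>j\<in>UNIV. real (k j))"
    have kbound: "real (k j) \<le> G / c" for j
    proof (cases "s = 0")
      case True
      then have "\<forall>j\<in>UNIV. real (k j) = 0" unfolding s_def
        by (subst sum_nonneg_eq_0_iff[symmetric]) auto
      then have "real (k j) = 0" by simp
      moreover have "G \<ge> 0" unfolding G_def using gam0 by (simp add: sum_nonneg)
      ultimately show ?thesis using cpos by simp
    next
      case False
      then have spos: "s > 0" unfolding s_def by (metis of_nat_0_le_iff order_le_less sum_nonneg)
      define v where "v = (1/s) *\<^sub>R kap"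
      have vs: "v$i = real (k i) / s" for i unfolding v_def kap_def by simp
      have "sum (\<lambda>i. v$i) UNIV = s / s" unfolding vs s_def by (rule sum_divide_distrib[symmetric])
      then have "sum (\<lambda>i. v$i) UNIV = 1" using spos by simp
      moreover have "\<forall>i. 0 \<le> v$i" unfolding vs using spos by simp
      ultimately have "v \<in> C" unfolding C_def by blast
      then have gv: "g v \<le> - c" by (rule gle)
      have "kap = s *\<^sub>R v" unfolding v_def using spos by simp
      then have "g kap = s * g v" using ghom spos by simp
      moreover have "s * g v \<le> s * (- c)" using gv spos by (intro mult_left_mono) auto
      ultimately have "s * c \<le> G" using gk by linarith
      then have "s \<le> G / c" using pos_le_divide_eq[OF cpos] by blast
      moreover have "real (k j) \<le> s" unfolding s_def
        by (rule member_le_sum) auto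
      ultimately show ?thesis by simp
    qed
    have "k j \<le> N" for j
    proof -
      have c1: "G / c \<le> real_of_int \<lceil>G / c\<rceil>" by (rule le_of_int_ceiling)
      have "0 \<le> G / c" using kbound[of j] by (meson of_nat_0_le_iff order_trans)
      then have "0 \<le> \<lceil>G / c\<rceil>" by simp
      then have "real N = real_of_int \<lceil>G / c\<rceil>" unfolding N_def by simp
      then have "real (k j) \<le> real N" using kbound[of j] c1 by linarith
      then show ?thesis by simp
    qed
    then have "(\<lambda>j. real (k j)) \<in> PiE UNIV (\<lambda>_. real ` {..N})" by (auto simp: PiE_UNIV_domain)
    moreover have "lam = gam + M *v vec_lambda (\<lambda>j. real (k j))"
    proof -
      have "vec_lambda (\<lambda>j. real (k j)) = kap" unfolding kap_def by simp
      have "lam = gam + (lam - gam)" by simp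
      also have "\<dots> = gam + M *v kap" by (simp only: lk)
      finally show ?thesis using \<open>vec_lambda (\<lambda>j. real (k j)) = kap\<close> by simp
    qed
    ultimately show "lam \<in> (\<lambda>f. gam + M *v vec_lambda f) ` (PiE UNIV (\<lambda>_. real ` {..N}))" by blast
  qed
  show ?thesis
    by (rule finite_subset[OF sub]) (intro finite_imageI finite_PiE; simp)
qed

end
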